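(* Let $T$ be the tournament on vertex set $\{0,1,2,3,4,5\}$ with arc set $\{(0,1),(0,3),(1,2),(1,5),(2,0),(2,4),(3,1),(3,2),(3,4),(4,0),(4,1),(4,5),(5,0),(5,2),(5,3)\}$. For every $n\geq 3$, there is a homomorphism from the directed cycle $\overrightarrow{C}_n$ to $T$.
   Context: $\overrightarrow{C}_n$ is the directed cycle on $n$ vertices (asymmetric). A homomorphism from a digraph $D$ to a digraph $H$ is a map $\phi:V(D)\to V(H)$ such that $(\phi(u),\phi(v))\in A(H)$ whenever $(u,v)\in A(D)$. *)

theory Defs
  imports Main
begin

definition dcycle_verts :: "nat \<Rightarrow> nat set" where
  "dcycle_verts n = {0..<n}"

definition dcycle_arcs :: "nat \<Rightarrow> (nat \<times> nat) set" where
  "dcycle_arcs n = {(i, (i + 1) mod n) | i. i < n}"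

definition is_digraph_hom ::
  "'a set \<Rightarrow> ('a \<times> 'a) set \<Rightarrow> 'b set \<Rightarrow> ('b \<times> 'b) set \<Rightarrow> ('a \<Rightarrow> 'b) \<Rightarrow> bool" where
  "is_digraph_hom VD AD VH AH \<phi> \<longleftrightarrow>
     (\<forall>v\<in>VD. \<phi> v \<in> VH) \<and> (\<forall>u v. (u, v) \<in> AD \<longrightarrow> (\<phi> u, \<phi> v) \<in> AH)"

definition T_verts :: "nat set" where
  "T_verts = {0,1,2,3,4,5}"

definition T_arcs :: "(nat \<times> nat) set" where
  "T_arcs = {(0,1),(0,3),(1,2),(1,5),(2,0),(2,4),(3,1),(3,2),(3,4),(4,0),(4,1),(4,5),(5,0),(5,2),(5,3)}"

end

theory Submission
  imports Defs
begin

definition ff :: "nat \<Rightarrow> nat \<Rightarrow> nat" where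
  "ff p i = (if i < p then [0,1,2,4,5::nat] ! i else (i - p) mod 3)"

lemma ff_v: "p \<le> 5 \<Longrightarrow> ff p i \<in> T_verts"
proof (cases "i < p")
  case True
  assume "p \<le> 5"
  then have "i = 0 \<or> i = 1 \<or> i = 2 \<or> i = 3 \<or> i = 4" using True by linarith
  then show ?thesis using True by (elim disjE) (simp_all add: ff_def T_verts_def)
next
  case False
  have "(i - p) mod 3 = 0 \<or> (i - p) mod 3 = 1 \<or> (i - p) mod 3 = 2" by linarith
  then show ?thesis using False by (elim disjE) (simp_all add: ff_def T_verts_def)
qed

lemma ff_0: "p = 0 \<and> q \<ge> 1 \<or> p = 4 \<or> p = 5 \<Longrightarrow> ff p 0 = 0"
  unfolding ff_def by auto

lemma ff_last: assumes "p = 0 \<and> q \<ge> 1 \<or> p = 4 \<or> p = 5" "i + 1 = p + 3*q"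
  shows "(ff p i, 0) \<in> T_arcs"
proof (cases "q = 0")
  case True
  then have "(p = 4 \<and> i = 3) \<or> (p = 5 \<and> i = 4)" using assms by auto
  then show ?thesis by (elim disjE conjE) (simp_all add: ff_def T_arcs_def)
next
  case False
  then have "i \<ge> p" "i - p = 2 + 3 * (q - 1)" using assms by auto
  then have "(i - p) mod 3 = (2 + 3 * (q - 1)) mod 3" by (simp only:)
  also have "\<dots> = 2 mod 3" by (simp only: mod_mult_self2)
  finally have "(i - p) mod 3 = 2" by simp
  then have "ff p i = 2" using \<open>i \<ge> p\<close> unfolding ff_def by simp
  then show ?thesis unfolding T_arcs_def by simp
qed

lemma ff_step: assumes "p = 0 \<and> q \<ge> 1 \<or> p = 4 \<or> p = 5" "i + 1 < p + 3*q"
  shows "(ff p i, ff p (i+1)) \<in> T_arcs"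
proof (cases "i + 1 < p")
  case True
  then have "(p = 4 \<or> p = 5) \<and> i < 4" using assms by auto
  then have "(p = 4 \<or> p = 5) \<and> (i = 0 \<or> i = 1 \<or> i = 2 \<or> i = 3)" by auto
  then show ?thesis using True by (elim disjE conjE) (simp_all add: ff_def T_arcs_def)
next
  case c2: False
  show ?thesis
  proof (cases "i < p")
    case True
    then have "i + 1 = p" using c2 by simp
    then have "(p = 4 \<and> i = 3) \<or> (p = 5 \<and> i = 4)" using assms by auto
    then show ?thesis by (elim disjE conjE) (simp_all add: ff_def T_arcs_def)
  next
    case False
    define k where "k = i - p"
    have e1: "ff p i = k mod 3" using False unfolding ff_def k_def by simp
    have e2: "ff p (i+1) = Suc k mod 3" using False unfolding ff_def k_def by (simp add: Suc_diff_le)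
    have "k mod 3 = 0 \<and> Suc k mod 3 = 1 \<or> k mod 3 = 1 \<and> Suc k mod 3 = 2
              \<or> k mod 3 = 2 \<and> Suc k mod 3 = 0" using mod_less_divisor[of 3 k] by (simp add: mod_Suc) linarith
    then show ?thesis unfolding e1 e2 by (elim disjE conjE) (simp_all add: T_arcs_def)
  qed
qed

lemma hom: assumes "p = 0 \<and> q \<ge> 1 \<or> p = 4 \<or> p = 5" "n = p + 3*q"
  shows "is_digraph_hom (dcycle_verts n) (dcycle_arcs n) T_verts T_arcs (ff p)"
proof -
  have "p \<le> 5" using assms by auto
  have a: "(ff p i, ff p ((i + 1) mod n)) \<in> T_arcs" if "i < n" for i
  proof (cases "i + 1 = n")
    case True
    then show ?thesis using ff_last[OF assms(1)] ff_0[OF assms(1)] assms(2) by simp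
  next
    case False
    then have "(i+1) mod n = i + 1" "i + 1 < p + 3*q" using that assms by auto
    then show ?thesis using ff_step[OF assms(1)] by simp
  qed
  show ?thesis unfolding is_digraph_hom_def dcycle_arcs_def
    using a ff_v[OF \<open>p \<le> 5\<close>] by blast
qed

theorem mainTheorem17:
  fixes n :: nat
  assumes "n \<ge> 3"
  shows "\<exists>\<phi> :: nat \<Rightarrow> nat. is_digraph_hom (dcycle_verts n) (dcycle_arcs n) T_verts T_arcs \<phi>"
proof -
  have "\<exists>p q. (p = 0 \<and> q \<ge> 1 \<or> p = 4 \<or> p = 5) \<and> n = p + 3*q"
  proof -
    have "n mod 3 = 0 \<or> n mod 3 = 1 \<or> n mod 3 = 2" by linarith
    moreover have "n = 3 * (n div 3) + n mod 3" by simp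
    have d: "n div 3 \<ge> 1" using assms by presburger
    ultimately consider "n mod 3 = 0" | "n mod 3 = 1" | "n mod 3 = 2" by argo
    then show ?thesis
    proof cases
      case 1
      then have "n = 0 + 3*(n div 3)" "n div 3 \<ge> 1" using assms \<open>n = 3 * (n div 3) + n mod 3\<close> by linarith+
      then show ?thesis by blast
    next
      case 2
      then have "n = 4 + 3*(n div 3 - 1)" using assms d \<open>n = 3 * (n div 3) + n mod 3\<close> by linarith
      then show ?thesis by blast
    next
      case 3
      then have "n = 5 + 3*(n div 3 - 1)" using assms d \<open>n = 3 * (n div 3) + n mod 3\<close> by linarith
      then show ?thesis by blast
    qed
  qed
  then show ?thesis using hom by blast
qed

end
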